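(* Suppose the standing assumptions (1)–(5) below hold. Let the updated dataset $\mathcal{D}'=(\mathbf{Z}',\mathbf{y})$ arise from $\mathcal{D}$ by any single or batch removal request, each request being either a feature removal (zeroing the entry of a node in some $\mathbf{x}_i$) or an entire node removal (zeroing that entry of $\mathbf{x}_i$ and the corresponding row and column of $\mathbf{S}_i$), with the embeddings of affected graphs recomputed by the GST and all other embeddings unchanged. Then the updated model $\mathbf{w}'=\mathbf{w}^\star+\mathbf{H}_{\mathbf{w}^\star}^{-1}\Delta$ satisfies $$\|\nabla L(\mathbf{w}',\mathcal{D}')\|\leq\gamma_2F\,\|\mathbf{Z}'\|\,\|\mathbf{H}_{\mathbf{w}^\star}^{-1}\Delta\|\,\|\mathbf{Z}'\mathbf{H}_{\mathbf{w}^\star}^{-1}\Delta\|,\qquad F=\sqrt{\sum_{l=0}^{L-1}B^{2l}},$$ where $\mathbf{Z}'$ is the data matrix of $\mathcal{D}'$ and $B$ is the upper frame constant of the graph wavelets used in the GST.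
   Context: Setting (graph classification). There are $n$ training graphs $\mathcal{G}_1,\dots,\mathcal{G}_n$. Graph $\mathcal{G}_i$ has $g_i$ nodes, a symmetric adjacency matrix $\mathbf{S}_i\in\mathbb{R}^{g_i\times g_i}$ (the graph shift operator), a node signal $\mathbf{x}_i\in\mathbb{R}^{g_i}$ (one scalar feature per node) and a label $y_i$. Graph scattering transform (GST). Fix positive integers $J,L$ and wavelet kernel functions $h_1,\dots,h_J:\mathbb{R}\to\mathbb{R}$. For a symmetric $\mathbf{S}=\mathbf{V}\mathbf{\Lambda}\mathbf{V}^T$ with eigenvalues $\lambda_1,\dots,\lambda_g$, set $\mathbf{H}_j(\mathbf{S})=\mathbf{V}\,\mathrm{diag}(h_j(\lambda_1),\dots,h_j(\lambda_g))\mathbf{V}^T$. The wavelets form a frame: there are constants $0<A\le B$ with $A^2\|\mathbf{x}\|^2\le\sum_{j=1}^J\|\mathbf{H}_j(\mathbf{S})\mathbf{x}\|^2\le B^2\|\mathbf{x}\|^2$ for all $\mathbf{x}$ (for all shift operators considered). Let $\rho$ be the entrywise absolute value. For a path $p=(j_1,\dots,j_l)$ with $j_k\in\{1,\dots,J\}$ and $0\le l\le L-1$, define $\Phi_{()}(\mathbf{S},\mathbf{x})=\mathbf{x}$ and $\Phi_{(j_1,\dots,j_l)}(\mathbf{S},\mathbf{x})=\rho\big(\mathbf{H}_{j_l}(\mathbf{S})\Phi_{(j_1,\dots,j_{l-1})}(\mathbf{S},\mathbf{x})\big)$, and the scalar coefficient $\phi_p(\mathbf{S},\mathbf{x})=U\Phi_p(\mathbf{S},\mathbf{x})$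 with the averaging operator $U=\frac{1}{g}\mathbf{1}^T$ ($g$ the number of nodes). The embedding $\Phi(\mathbf{S},\mathbf{x})\in\mathbb{R}^d$, $d=\sum_{l=0}^{L-1}J^l$, is the concatenation of all $\phi_p(\mathbf{S},\mathbf{x})$. Set $\mathbf{z}_i=\Phi(\mathbf{S}_i,\mathbf{x}_i)$, let $\mathbf{Z}\in\mathbb{R}^{n\times d}$ have rows $\mathbf{z}_i^T$, and $\mathcal{D}=(\mathbf{Z},\mathbf{y})$. Learning and update. $\ell(s,y)$ is convex and twice differentiable in $s$; $\ell'$, $\ell''$ denote derivatives in $s$, and $\nabla$, $\nabla^2$ denote gradient/Hessian in $\mathbf{w}$. For a dataset $\mathcal{D}=(\mathbf{Z},\mathbf{y})$, $L(\mathbf{w},\mathcal{D})=\sum_{i=1}^n\big(\ell(\mathbf{w}^T\mathbf{z}_i,y_i)+\frac{\lambda}{2}\|\mathbf{w}\|^2\big)$ with $\lambda>0$, and $\mathbf{w}^\star=\arg\min_{\mathbf{w}}L(\mathbf{w},\mathcal{D})$. For the updated dataset $\mathcal{D}'$, set $\mathbf{H}_{\mathbf{w}^\star}=\nabla^2L(\mathbf{w}^\star,\mathcal{D}')$ and $\Delta=\nabla L(\mathbf{w}^\star,\mathcal{D})-\nabla L(\mathbf{w}^\star,\mathcal{D}')$. Norms are $\ell_2$ for vectors and operator norm for matrices. Standing assumptions: there are constants $C_1,C_2,\gamma_1,\gamma_2$ such that for every embedding $\mathbf{z}_i$ (of $\mathcal{D}$ or $\mathcal{D}'$) and every $\mathbf{w}\in\mathbb{R}^d$: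 (1) $\|\nabla\ell(\mathbf{w}^T\mathbf{z}_i,y_i)\|\le C_1$; (2) $|\ell'(\mathbf{w}^T\mathbf{z}_i,y_i)|\le C_2$; (3) $\ell'$ is $\gamma_1$-Lipschitz; (4) $\ell''$ is $\gamma_2$-Lipschitz; (5) the signals (before and after removal) satisfy $|[\mathbf{x}_i]_j|\le1$ for all $i$ and all $j\in\{1,\dots,g_i\}$. *)

theory Defs
  imports "HOL-Analysis.Analysis"
begin

text \<open>Finite-dimensional vectors/matrices of varying size (one size g per graph) are
  represented as functions on nat, only the entries with index < g being meaningful.\<close>

definition orth_mat :: "nat \<Rightarrow> (nat \<Rightarrow> nat \<Rightarrow> real) \<Rightarrow> bool" where
  "orth_mat g V \<longleftrightarrow> (\<forall>i<g. \<forall>j<g. (\<Sum>k<g. V k i * V k j) = (if i = j then 1 else 0))"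

definition spec_decomp :: "nat \<Rightarrow> (nat \<Rightarrow> nat \<Rightarrow> real) \<Rightarrow> (nat \<Rightarrow> nat \<Rightarrow> real) \<Rightarrow> (nat \<Rightarrow> real) \<Rightarrow> bool" where
  "spec_decomp g S V lam \<longleftrightarrow> orth_mat g V \<and>
     (\<forall>i<g. \<forall>j<g. S i j = (\<Sum>k<g. V i k * lam k * V j k))"

definition matfun :: "(real \<Rightarrow> real) \<Rightarrow> nat \<Rightarrow> (nat \<Rightarrow> nat \<Rightarrow> real) \<Rightarrow> nat \<Rightarrow> nat \<Rightarrow> real" where
  "matfun h g S =
     (let (V, lam) = (SOME (V, lam). spec_decomp g S V lam)
      in (\<lambda>i j. if i < g \<and> j < g then (\<Sum>k<g. V i k * h (lam k) * V j k) else 0))"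

definition mat_apply :: "nat \<Rightarrow> (nat \<Rightarrow> nat \<Rightarrow> real) \<Rightarrow> (nat \<Rightarrow> real) \<Rightarrow> nat \<Rightarrow> real" where
  "mat_apply g M u = (\<lambda>a. \<Sum>b<g. M a b * u b)"

definition sqnorm :: "nat \<Rightarrow> (nat \<Rightarrow> real) \<Rightarrow> real" where
  "sqnorm g u = (\<Sum>a<g. (u a)\<^sup>2)"

definition gst_paths :: "nat \<Rightarrow> nat \<Rightarrow> nat list set" where
  "gst_paths J L = {p. length p < L \<and> set p \<subseteq> {1..J}}"

definition gst_Phi :: "(nat \<Rightarrow> real \<Rightarrow> real) \<Rightarrow> nat \<Rightarrow> (nat \<Rightarrow> nat \<Rightarrow> real) \<Rightarrow> (nat \<Rightarrow> real) \<Rightarrow> nat list \<Rightarrow> nat \<Rightarrow> real" where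
  "gst_Phi h g S x p =
     foldl (\<lambda>v j. (\<lambda>a. \<bar>mat_apply g (matfun (h j) g S) v a\<bar>)) x p"

definition gst_coeff :: "(nat \<Rightarrow> real \<Rightarrow> real) \<Rightarrow> nat \<Rightarrow> (nat \<Rightarrow> nat \<Rightarrow> real) \<Rightarrow> (nat \<Rightarrow> real) \<Rightarrow> nat list \<Rightarrow> real" where
  "gst_coeff h g S x p = (1 / real g) * (\<Sum>a<g. gst_Phi h g S x p a)"

text \<open>The embedding Phi(S,x) in R^d: the coordinates of the parameter space 'd are put in
  bijection with the paths by pidx (the order of concatenation).\<close>
definition gst_embed :: "('d::finite \<Rightarrow> nat list) \<Rightarrow> (nat \<Rightarrow> real \<Rightarrow> real) \<Rightarrow> nat \<Rightarrow> (nat \<Rightarrow> nat \<Rightarrow> real) \<Rightarrow> (nat \<Rightarrow> real) \<Rightarrow> real ^ 'd" where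
  "gst_embed pidx h g S x = (\<chi> k. gst_coeff h g S x (pidx k))"

definition grad :: "(real ^ 'd \<Rightarrow> real) \<Rightarrow> real ^ 'd \<Rightarrow> real ^ 'd" where
  "grad f w = (SOME v. (f has_derivative (\<lambda>u. v \<bullet> u)) (at w))"

definition hess :: "(real ^ 'd \<Rightarrow> real) \<Rightarrow> real ^ 'd \<Rightarrow> real ^ 'd ^ 'd" where
  "hess f w = (SOME H. (grad f has_derivative (\<lambda>u. H *v u)) (at w))"

definition Lfun :: "(real \<Rightarrow> 'y \<Rightarrow> real) \<Rightarrow> real \<Rightarrow> nat \<Rightarrow> (nat \<Rightarrow> real ^ 'd) \<Rightarrow> (nat \<Rightarrow> 'y) \<Rightarrow> real ^ 'd \<Rightarrow> real" where
  "Lfun l lam n Z y w = (\<Sum>i<n. l (w \<bullet> Z i) (y i) + lam / 2 * (norm w)\<^sup>2)"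

definition rows_apply_norm :: "nat \<Rightarrow> (nat \<Rightarrow> real ^ 'd) \<Rightarrow> real ^ 'd \<Rightarrow> real" where
  "rows_apply_norm n Z v = sqrt (\<Sum>i<n. (Z i \<bullet> v)\<^sup>2)"

definition rows_opnorm :: "nat \<Rightarrow> (nat \<Rightarrow> real ^ 'd) \<Rightarrow> real" where
  "rows_opnorm n Z = (SUP v\<in>{v. norm v \<le> 1}. rows_apply_norm n Z v)"

end

theory Submission
  imports Defs
begin

lemma grad_eqI:
  fixes f :: "real ^ 'd \<Rightarrow> real"
  assumes "(f has_derivative (\<lambda>u. v \<bullet> u)) (at w)"
  shows "grad f w = v"
  unfolding grad_def
proof (rule some_equality)
  fix v' assume "(f has_derivative (\<lambda>u. v' \<bullet> u)) (at w)"
  from has_derivative_unique[OF this assms] have "\<And>u. v' \<bullet> u = v \<bullet> u" by metis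
  then have "(v' - v) \<bullet> (v' - v) = 0" by (simp add: inner_diff_left inner_diff_right)
  then show "v' = v" by simp
qed (rule assms)

lemma hess_eqI:
  fixes f :: "real ^ 'd \<Rightarrow> real"
  assumes "grad f = G" "(G has_derivative Hf) (at w)"
  shows "hess f w *v u = Hf u"
proof -
  have bl: "bounded_linear Hf" using assms(2) has_derivative_bounded_linear by blast
  have mw: "\<And>x. matrix Hf *v x = Hf x" using matrix_vector_mul(3)[OF bl] by metis
  have ex: "(grad f has_derivative (\<lambda>u. matrix Hf *v u)) (at w)" using assms mw by simp
  have "(grad f has_derivative (\<lambda>u. hess f w *v u)) (at w)"
    unfolding hess_def by (rule someI, rule ex)
  from has_derivative_unique[OF this ex] have "\<And>u. hess f w *v u = matrix Hf *v u" by metis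
  then show ?thesis using mw by simp
qed

definition Gf :: "(real \<Rightarrow> 'y \<Rightarrow> real) \<Rightarrow> real \<Rightarrow> nat \<Rightarrow> (nat \<Rightarrow> real ^ 'd) \<Rightarrow> (nat \<Rightarrow> 'y) \<Rightarrow> real ^ 'd \<Rightarrow> real ^ 'd" where
  "Gf l' lam n Z y w = (\<Sum>i<n. l' (w \<bullet> Z i) (y i) *\<^sub>R Z i + lam *\<^sub>R w)"

lemma comp_deriv:
  assumes "\<forall>s yy. ((\<lambda>t. l t yy) has_real_derivative l' s yy) (at s)"
  shows "((\<lambda>w::real^'d. l (w \<bullet> z) yy) has_derivative (\<lambda>u. l' (w \<bullet> z) yy * (u \<bullet> z))) (at w)"
proof -
  have d1: "((\<lambda>w::real^'d. w \<bullet> z) has_derivative (\<lambda>u. u \<bullet> z)) (at w)"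
    by (intro derivative_eq_intros) auto
  have d2: "((\<lambda>t. l t yy) has_derivative (\<lambda>x. l' (w \<bullet> z) yy * x)) (at (w \<bullet> z))"
    using assms unfolding has_field_derivative_def by blast
  show ?thesis using has_derivative_compose[OF d1 d2] by simp
qed

lemma Lfun_deriv:
  fixes w :: "real ^ 'd"
  assumes "\<forall>s yy. ((\<lambda>t. l t yy) has_real_derivative l' s yy) (at s)"
  shows "(Lfun l lam n Z y has_derivative (\<lambda>u. Gf l' lam n Z y w \<bullet> u)) (at w)"
proof -
  have nd: "((\<lambda>w::real^'d. (norm w)\<^sup>2) has_derivative (\<lambda>u. 2 * (w \<bullet> u))) (at w)"
    unfolding power2_norm_eq_inner
    by (rule has_derivative_eq_rhs, (intro derivative_eq_intros)) (auto simp: inner_commute)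
  have "((\<lambda>w. \<Sum>i<n. l (w \<bullet> Z i) (y i) + lam / 2 * (norm w)\<^sup>2) has_derivative
     (\<lambda>u. \<Sum>i<n. l' (w \<bullet> Z i) (y i) * (u \<bullet> Z i) + lam / 2 * (2 * (w \<bullet> u)))) (at w)"
    by (intro has_derivative_sum has_derivative_add has_derivative_mult_right comp_deriv[OF assms] nd)
  then show ?thesis unfolding Lfun_def[abs_def] Gf_def
    by (rule has_derivative_eq_rhs) (auto simp: fun_eq_iff inner_sum_right inner_add_right inner_commute)
qed

lemma Gf_deriv:
  fixes w :: "real ^ 'd"
  assumes "\<forall>s yy. ((\<lambda>t. l' t yy) has_real_derivative l'' s yy) (at s)"
  shows "(Gf l' lam n Z y has_derivative
     (\<lambda>u. (\<Sum>i<n. (l'' (w \<bullet> Z i) (y i) * (u \<bullet> Z i)) *\<^sub>R Z i + lam *\<^sub>R u))) (at w)"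
  unfolding Gf_def[abs_def]
  by (intro has_derivative_sum has_derivative_add has_derivative_scaleR_left comp_deriv[OF assms]
      has_derivative_scaleR_right has_derivative_ident)

lemma lpp_nonneg:
  assumes d: "\<forall>s yy. ((\<lambda>t. l t yy) has_real_derivative l' s yy) (at s)"
    and d2: "\<forall>s yy. ((\<lambda>t. l' t yy) has_real_derivative l'' s yy) (at s)"
    and cv: "\<forall>yy. convex_on UNIV (\<lambda>s. l s yy)"
  shows "l'' s yy \<ge> 0"
proof -
  have tang: "l t yy - l s yy \<ge> l' s yy * (t - s)" for s t
    by (rule convex_on_imp_above_tangent[where A=UNIV]) (use cv d in auto)
  have "mono_on UNIV (\<lambda>t. l' t yy)"
  proof (rule mono_onI)
    fix s t :: real assume "s \<le> t"
    show "l' s yy \<le> l' t yy"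
    proof (cases "s = t")
      case False
      with \<open>s \<le> t\<close> have st: "s < t" by simp
      have "l' s yy * (t - s) \<le> l' t yy * (t - s)" using tang[of t s] tang[of s t] by (simp add: algebra_simps)
      then show ?thesis using st by simp
    qed simp
  qed
  then show ?thesis by (rule mono_on_imp_deriv_nonneg) (use d2 in auto)
qed

lemma taylor_bound:
  fixes f f' :: "real \<Rightarrow> real"
  assumes d: "\<And>s. (f has_real_derivative f' s) (at s)"
    and lip: "\<forall>s t. \<bar>f' s - f' t\<bar> \<le> c * \<bar>s - t\<bar>"
  shows "\<bar>f b - f a - f' a * (b - a)\<bar> \<le> c * (b - a)\<^sup>2"
proof (cases a b rule: linorder_cases)
  case less
  obtain z where z: "a < z" "z < b" "f b - f a = (b - a) * f' z" using MVT2[OF less d] by blast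
  have "f b - f a - f' a * (b - a) = (b - a) * (f' z - f' a)"
    unfolding right_diff_distrib[of "b - a"] z(3)[symmetric] by (simp add: mult.commute)
  then have "\<bar>f b - f a - f' a * (b - a)\<bar> = \<bar>b - a\<bar> * \<bar>f' z - f' a\<bar>"
    by (simp add: abs_mult)
  also have "\<dots> \<le> \<bar>b - a\<bar> * (c * \<bar>z - a\<bar>)" using lip by (intro mult_left_mono) auto
  also have "\<dots> \<le> \<bar>b - a\<bar> * (c * \<bar>b - a\<bar>)"
  proof -
    have c: "c \<ge> 0" using lip[rule_format, of 1 0] by simp
    show ?thesis using z c by (intro mult_left_mono) (auto intro: mult_left_mono)
  qed
  finally show ?thesis by (simp add: power2_eq_square algebra_simps)
next
  case greater
  obtain z where z: "b < z" "z < a" "f a - f b = (a - b) * f' z" using MVT2[OF greater d] by blast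
  have "f b - f a - f' a * (b - a) = (a - b) * (f' a - f' z)"
    unfolding right_diff_distrib[of "a - b"] z(3)[symmetric] by (simp add: algebra_simps)
  then have "\<bar>f b - f a - f' a * (b - a)\<bar> = \<bar>a - b\<bar> * \<bar>f' z - f' a\<bar>"
    by (simp add: abs_mult abs_minus_commute)
  also have "\<dots> \<le> \<bar>a - b\<bar> * (c * \<bar>z - a\<bar>)" using lip by (intro mult_left_mono) auto
  also have "\<dots> \<le> \<bar>a - b\<bar> * (c * \<bar>a - b\<bar>)"
  proof -
    have c: "c \<ge> 0" using lip[rule_format, of 1 0] by simp
    show ?thesis using z c by (intro mult_left_mono) (auto intro: mult_left_mono)
  qed
  finally show ?thesis by (simp add: power2_eq_square algebra_simps)
qed simp


definition Pl :: "nat \<Rightarrow> nat \<Rightarrow> nat list set" where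
  "Pl J l = {p. length p = l \<and> set p \<subseteq> {1..J}}"

lemma Pl_finite: "finite (Pl J l)"
  unfolding Pl_def using finite_lists_length_eq[of "{1..J}" l] by (simp add: conj_commute)

lemma Pl_Suc: "Pl J (Suc l) = (\<lambda>(p, j). p @ [j]) ` (Pl J l \<times> {1..J})"
proof (rule set_eqI, rule iffI)
  fix q assume q: "q \<in> Pl J (Suc l)"
  then have "q \<noteq> []" by (auto simp: Pl_def)
  then have "q = butlast q @ [last q]" by simp
  moreover have "butlast q \<in> Pl J l" using q \<open>q \<noteq> []\<close>
    by (auto simp: Pl_def dest: in_set_butlastD)
  moreover have "last q \<in> {1..J}" using q \<open>q \<noteq> []\<close> last_in_set[of q]
    unfolding Pl_def by blast
  ultimately show "q \<in> (\<lambda>(p, j). p @ [j]) ` (Pl J l \<times> {1..J})" by force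
qed (auto simp: Pl_def)

lemma sum_Pl_Suc: "sum f (Pl J (Suc l)) = (\<Sum>p\<in>Pl J l. \<Sum>j\<in>{1..J}. f (p @ [j]))"
proof -
  have inj: "inj_on (\<lambda>(p, j). p @ [j]) (Pl J l \<times> {1..J})"
    by (auto simp: inj_on_def)
  show ?thesis unfolding Pl_Suc sum.reindex[OF inj] sum.cartesian_product by (simp add: case_prod_beta)
qed

lemma sqnorm_abs: "sqnorm g (\<lambda>a. \<bar>u a\<bar>) = sqnorm g u"
  unfolding sqnorm_def by simp

lemma energy:
  assumes frame: "\<forall>u. (\<Sum>j=1..J. sqnorm g (mat_apply g (matfun (h j) g T) u)) \<le> B\<^sup>2 * sqnorm g u"
  shows "(\<Sum>p\<in>Pl J l. sqnorm g (gst_Phi h g T x p)) \<le> B ^ (2 * l) * sqnorm g x"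
proof (induction l)
  case 0
  have "Pl J 0 = {[]}" by (auto simp: Pl_def)
  then show ?case by (simp add: gst_Phi_def)
next
  case (Suc l)
  have "(\<Sum>p\<in>Pl J (Suc l). sqnorm g (gst_Phi h g T x p))
      = (\<Sum>p\<in>Pl J l. \<Sum>j=1..J. sqnorm g (mat_apply g (matfun (h j) g T) (gst_Phi h g T x p)))"
    unfolding sum_Pl_Suc by (simp add: gst_Phi_def sqnorm_abs)
  also have "\<dots> \<le> (\<Sum>p\<in>Pl J l. B\<^sup>2 * sqnorm g (gst_Phi h g T x p))"
    using frame by (intro sum_mono) blast
  also have "\<dots> = B\<^sup>2 * (\<Sum>p\<in>Pl J l. sqnorm g (gst_Phi h g T x p))"
    by (simp add: sum_distrib_left)
  also have "\<dots> \<le> B\<^sup>2 * (B ^ (2 * l) * sqnorm g x)"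
    using Suc.IH by (intro mult_left_mono) auto
  also have "\<dots> = B ^ (2 * Suc l) * sqnorm g x"
    by (simp add: power_add power_mult power2_eq_square)
  finally show ?case .
qed

lemma sum_sq_le: "(\<Sum>a<g. f a)\<^sup>2 \<le> real g * (\<Sum>a<g. (f a)\<^sup>2)"
proof -
  have "\<bar>\<Sum>a<g. f a\<bar> \<le> (\<Sum>a<g. \<bar>f a\<bar> * \<bar>1\<bar>)" by (simp add: sum_abs)
  also have "\<dots> \<le> L2_set f {..<g} * L2_set (\<lambda>_. 1) {..<g}" by (rule L2_set_mult_ineq)
  finally have "\<bar>\<Sum>a<g. f a\<bar> \<le> L2_set f {..<g} * L2_set (\<lambda>_. 1) {..<g}" .
  then have "\<bar>\<Sum>a<g. f a\<bar>\<^sup>2 \<le> (L2_set f {..<g} * L2_set (\<lambda>_. 1) {..<g})\<^sup>2"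
    by (intro power_mono) auto
  also have "\<dots> = (\<Sum>a<g. (f a)\<^sup>2) * real g"
    unfolding power_mult_distrib L2_set_def by (simp add: sum_nonneg)
  finally show ?thesis by (simp add: mult.commute)
qed

lemma coeff_sq: "(gst_coeff h g T x p)\<^sup>2 \<le> sqnorm g (gst_Phi h g T x p) / real g"
proof (cases "g = 0")
  case True then show ?thesis by (simp add: gst_coeff_def)
next
  case False
  have "(gst_coeff h g T x p)\<^sup>2 = (\<Sum>a<g. gst_Phi h g T x p a)\<^sup>2 / (real g)\<^sup>2"
    by (simp add: gst_coeff_def power_divide)
  also have "\<dots> \<le> real g * sqnorm g (gst_Phi h g T x p) / (real g)\<^sup>2"
    unfolding sqnorm_def by (intro divide_right_mono sum_sq_le) auto
  also have "\<dots> = sqnorm g (gst_Phi h g T x p) / real g"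
    using False by (simp add: power2_eq_square)
  finally show ?thesis .
qed

lemma gst_paths_sum: "sum f (gst_paths J L) = (\<Sum>l<L. sum f (Pl J l))"
proof (induction L)
  case 0 then show ?case by (simp add: gst_paths_def)
next
  case (Suc L)
  have eq: "gst_paths J (Suc L) = gst_paths J L \<union> Pl J L"
    by (auto simp: gst_paths_def Pl_def)
  have fin: "finite (gst_paths J L)"
  proof -
    have "gst_paths J L = (\<Union>l<L. Pl J l)" by (auto simp: gst_paths_def Pl_def)
    then show ?thesis using Pl_finite by simp
  qed
  have "sum f (gst_paths J (Suc L)) = sum f (gst_paths J L) + sum f (Pl J L)"
    unfolding eq by (rule sum.union_disjoint) (use fin Pl_finite in \<open>auto simp: gst_paths_def Pl_def\<close>)
  then show ?case using Suc by simp
qed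

lemma embed_norm:
  fixes pidx :: "'d::finite \<Rightarrow> nat list"
  assumes pidx: "bij_betw pidx UNIV (gst_paths J L)"
    and frame: "\<forall>u. (\<Sum>j=1..J. sqnorm g (mat_apply g (matfun (h j) g T) u)) \<le> B\<^sup>2 * sqnorm g u"
    and xb: "\<forall>a<g. \<bar>x a\<bar> \<le> 1"
  shows "norm (gst_embed pidx h g T x) \<le> sqrt (\<Sum>k<L. B ^ (2 * k))"
proof -
  have sx: "sqnorm g x / real g \<le> 1"
  proof (cases "g = 0")
    case False
    have "sqnorm g x \<le> (\<Sum>a<g. 1)" unfolding sqnorm_def
      using xb by (intro sum_mono) (simp add: abs_square_le_1)
    then show ?thesis using False by simp
  qed simp
  have "(norm (gst_embed pidx h g T x))\<^sup>2 = (\<Sum>k\<in>UNIV. (gst_coeff h g T x (pidx k))\<^sup>2)"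
    unfolding power2_norm_eq_inner inner_vec_def gst_embed_def by (simp add: power2_eq_square)
  also have "\<dots> = (\<Sum>p\<in>gst_paths J L. (gst_coeff h g T x p)\<^sup>2)"
    by (rule sum.reindex_bij_betw[OF pidx])
  also have "\<dots> = (\<Sum>l<L. \<Sum>p\<in>Pl J l. (gst_coeff h g T x p)\<^sup>2)"
    by (rule gst_paths_sum)
  also have "\<dots> \<le> (\<Sum>l<L. \<Sum>p\<in>Pl J l. sqnorm g (gst_Phi h g T x p) / real g)"
    by (intro sum_mono coeff_sq)
  also have "\<dots> = (\<Sum>l<L. (\<Sum>p\<in>Pl J l. sqnorm g (gst_Phi h g T x p)) / real g)"
    by (simp add: sum_divide_distrib)
  also have "\<dots> \<le> (\<Sum>l<L. B ^ (2 * l) * sqnorm g x / real g)"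
    by (intro sum_mono divide_right_mono energy[OF frame]) auto
  also have "\<dots> \<le> (\<Sum>l<L. B ^ (2 * l))"
  proof (intro sum_mono)
    fix l
    have "B ^ (2 * l) * sqnorm g x / real g = B ^ (2 * l) * (sqnorm g x / real g)" by simp
    also have "\<dots> \<le> B ^ (2 * l) * 1"
      using sx by (intro mult_left_mono) (auto simp: power_mult)
    finally show "B ^ (2 * l) * sqnorm g x / real g \<le> B ^ (2 * l)" by simp
  qed
  finally show ?thesis by (rule real_le_rsqrt)
qed


lemma ran_le:
  fixes Z :: "nat \<Rightarrow> real ^ 'd"
  assumes "norm v \<le> 1"
  shows "rows_apply_norm n Z v \<le> sqrt (\<Sum>i<n. (norm (Z i))\<^sup>2)"
  unfolding rows_apply_norm_def
proof (intro real_sqrt_le_mono sum_mono)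
  fix i
  have "\<bar>Z i \<bullet> v\<bar> \<le> norm (Z i) * norm v" by (rule Cauchy_Schwarz_ineq2)
  also have "\<dots> \<le> norm (Z i)" using assms by (simp add: mult_left_le)
  finally show "(Z i \<bullet> v)\<^sup>2 \<le> (norm (Z i))\<^sup>2"
    by (metis abs_le_square_iff abs_norm_cancel)
qed

lemma ran_bdd: "bdd_above ((rows_apply_norm n (Z :: nat \<Rightarrow> real ^ 'd)) ` {v. norm v \<le> 1})"
  by (rule bdd_aboveI2[where M="sqrt (\<Sum>i<n. (norm (Z i))\<^sup>2)"]) (use ran_le in auto)

lemma ran_scale: "rows_apply_norm n Z (c *\<^sub>R v) = \<bar>c\<bar> * rows_apply_norm n Z v"
proof -
  have "(\<Sum>i<n. (Z i \<bullet> (c *\<^sub>R v))\<^sup>2) = c\<^sup>2 * (\<Sum>i<n. (Z i \<bullet> v)\<^sup>2)"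
    by (simp add: sum_distrib_left power_mult_distrib)
  then show ?thesis unfolding rows_apply_norm_def by (simp add: real_sqrt_mult sum_nonneg)
qed

lemma ran_nonneg: "rows_apply_norm n Z v \<ge> 0"
  unfolding rows_apply_norm_def by (intro real_sqrt_ge_zero sum_nonneg) simp

lemma opnorm_upper: "norm v \<le> 1 \<Longrightarrow> rows_apply_norm n (Z :: nat \<Rightarrow> real ^ 'd) v \<le> rows_opnorm n Z"
  unfolding rows_opnorm_def by (rule cSUP_upper[OF _ ran_bdd]) simp

lemma opnorm_nonneg: "rows_opnorm n (Z :: nat \<Rightarrow> real ^ 'd) \<ge> 0"
  using opnorm_upper[of 0 n Z] ran_nonneg[of n Z 0] by simp

lemma opnorm_bound: "rows_apply_norm n (Z :: nat \<Rightarrow> real ^ 'd) v \<le> rows_opnorm n Z * norm v"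
proof (cases "v = 0")
  case True
  then show ?thesis by (simp add: rows_apply_norm_def)
next
  case False
  then have np: "norm v > 0" by simp
  have "rows_apply_norm n Z ((1 / norm v) *\<^sub>R v) \<le> rows_opnorm n Z"
    by (rule opnorm_upper) (use np in simp)
  then have "rows_apply_norm n Z v / norm v \<le> rows_opnorm n Z"
    unfolding ran_scale using np by simp
  then show ?thesis using np by (simp add: divide_le_eq)
qed

lemma transpose_bound:
  fixes Z :: "nat \<Rightarrow> real ^ 'd"
  shows "norm (\<Sum>i<n. r i *\<^sub>R Z i) \<le> sqrt (\<Sum>i<n. (r i)\<^sup>2) * rows_opnorm n Z"
proof -
  define u where "u = (\<Sum>i<n. r i *\<^sub>R Z i)"
  have "(norm u)\<^sup>2 = u \<bullet> u" by (simp add: power2_norm_eq_inner)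
  also have "\<dots> = (\<Sum>i<n. r i * (Z i \<bullet> u))" unfolding u_def[symmetric, THEN sym]
    by (simp add: u_def inner_sum_left)
  also have "\<dots> \<le> (\<Sum>i<n. \<bar>r i\<bar> * \<bar>Z i \<bullet> u\<bar>)"
    by (intro sum_mono) (simp add: abs_mult[symmetric])
  also have "\<dots> \<le> L2_set r {..<n} * L2_set (\<lambda>i. Z i \<bullet> u) {..<n}" by (rule L2_set_mult_ineq)
  also have "\<dots> = sqrt (\<Sum>i<n. (r i)\<^sup>2) * rows_apply_norm n Z u"
    by (simp add: L2_set_def rows_apply_norm_def)
  also have "\<dots> \<le> sqrt (\<Sum>i<n. (r i)\<^sup>2) * (rows_opnorm n Z * norm u)"
    by (intro mult_left_mono opnorm_bound) (simp add: sum_nonneg)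
  finally have *: "norm u * norm u \<le> (sqrt (\<Sum>i<n. (r i)\<^sup>2) * rows_opnorm n Z) * norm u"
    by (simp add: power2_eq_square mult.assoc)
  show ?thesis
  proof (cases "norm u = 0")
    case True then show ?thesis using opnorm_nonneg[of n Z] by (simp add: u_def sum_nonneg)
  next
    case False
    then have "norm u > 0" by simp
    with * have "norm u \<le> sqrt (\<Sum>i<n. (r i)\<^sup>2) * rows_opnorm n Z"
      by (simp add: mult_le_cancel_right)
    then show ?thesis by (simp add: u_def)
  qed
qed


theorem theorem4p6:
  fixes n J L :: nat
    and g :: "nat \<Rightarrow> nat"
    and S :: "nat \<Rightarrow> nat \<Rightarrow> nat \<Rightarrow> real"
    and x :: "nat \<Rightarrow> nat \<Rightarrow> real"
    and y :: "nat \<Rightarrow> 'y"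
    and h :: "nat \<Rightarrow> real \<Rightarrow> real"
    and A B lam C1 C2 \<gamma>1 \<gamma>2 :: real
    and pidx :: "'d::finite \<Rightarrow> nat list"
    and l l' l'' :: "real \<Rightarrow> 'y \<Rightarrow> real"
    and RF RN :: "(nat \<times> nat) set"
    and wstar :: "real ^ 'd"
    and S' :: "nat \<Rightarrow> nat \<Rightarrow> nat \<Rightarrow> real"
    and x' :: "nat \<Rightarrow> nat \<Rightarrow> real"
    and Z Z' :: "nat \<Rightarrow> real ^ 'd"
    and Hm :: "real ^ 'd ^ 'd"
    and \<Delta> :: "real ^ 'd"
    and F :: real
  assumes J_pos: "0 < J" and L_pos: "0 < L"
    and pidx: "bij_betw pidx UNIV (gst_paths J L)"
    and S_sym: "\<forall>i<n. \<forall>a<g i. \<forall>b<g i. S i a b = S i b a"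
    and S'_def: "S' =  (\<lambda>i a b. if (i, a) \<in> RN \<or> (i, b) \<in> RN then 0 else S i a b)"
    and x'_def: "x' =  (\<lambda>i a. if (i, a) \<in> RF \<union> RN then 0 else x i a)"
    and Z_def: "Z =  (\<lambda>i. gst_embed pidx h (g i) (S i) (x i))"
    and Z'_def: "Z' =  (\<lambda>i. gst_embed pidx h (g i) (S' i) (x' i))"
    and frame_pos: "0 < A" "A \<le> B"
    and frame: "\<forall>i<n. \<forall>T\<in>{S i, S' i}. \<forall>u.
        A\<^sup>2 * sqnorm (g i) u \<le> (\<Sum>j=1..J. sqnorm (g i) (mat_apply (g i) (matfun (h j) (g i) T) u))
      \<and> (\<Sum>j=1..J. sqnorm (g i) (mat_apply (g i) (matfun (h j) (g i) T) u)) \<le> B\<^sup>2 * sqnorm (g i) u"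
    and lam_pos: "0 < lam"
    and l_deriv: "\<forall>s yy. ((\<lambda>t. l t yy) has_real_derivative l' s yy) (at s)"
    and l'_deriv: "\<forall>s yy. ((\<lambda>t. l' t yy) has_real_derivative l'' s yy) (at s)"
    and l_convex: "\<forall>yy. convex_on UNIV (\<lambda>s. l s yy)"
    and A1: "\<forall>i<n. \<forall>z\<in>{Z i, Z' i}. \<forall>w. norm (grad (\<lambda>v. l (v \<bullet> z) (y i)) w) \<le> C1"
    and A2: "\<forall>i<n. \<forall>z\<in>{Z i, Z' i}. \<forall>w. \<bar>l' (w \<bullet> z) (y i)\<bar> \<le> C2"
    and A3: "\<forall>i<n. \<forall>s t. \<bar>l' s (y i) - l' t (y i)\<bar> \<le> \<gamma>1 * \<bar>s - t\<bar>"
    and A4: "\<forall>i<n. \<forall>s t. \<bar>l'' s (y i) - l'' t (y i)\<bar> \<le> \<gamma>2 * \<bar>s - t\<bar>"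
    and A5: "\<forall>i<n. \<forall>a<g i. \<bar>x i a\<bar> \<le> 1"
    and wstar_min: "\<forall>w. Lfun l lam n Z y wstar \<le> Lfun l lam n Z y w"
    and Hm_def: "Hm =  hess (Lfun l lam n Z' y) wstar"
    and \<Delta>_def: "\<Delta> =  grad (Lfun l lam n Z y) wstar - grad (Lfun l lam n Z' y) wstar"
    and F_def: "F =  sqrt (\<Sum>k<L. B ^ (2 * k))"
  shows "norm (grad (Lfun l lam n Z' y) (wstar + matrix_inv Hm *v \<Delta>))
    \<le> \<gamma>2 * F * rows_opnorm n Z' * norm (matrix_inv Hm *v \<Delta>)
        * rows_apply_norm n Z' (matrix_inv Hm *v \<Delta>)"
proof -
  have gradG: "\<And>ZZ. grad (Lfun l lam n ZZ y) = Gf l' lam n ZZ y"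
    by (rule ext, rule grad_eqI, rule Lfun_deriv[OF l_deriv])
  define v where "v = matrix_inv Hm *v \<Delta>"
  define Hf where "Hf = (\<lambda>u. (\<Sum>i<n. (l'' (wstar \<bullet> Z' i) (y i) * (u \<bullet> Z' i)) *\<^sub>R Z' i + lam *\<^sub>R u))"
  show ?thesis
  proof (cases "n = 0")
    case True
    then show ?thesis unfolding gradG by (simp add: Gf_def rows_apply_norm_def)
  next
    case False
    then have npos: "n > 0" by simp
    have g2: "\<gamma>2 \<ge> 0" using A4 npos by (metis abs_ge_zero diff_zero abs_one mult.right_neutral order_trans)
    have G0: "Gf l' lam n Z y wstar = 0"
    proof -
      have "(\<lambda>u. Gf l' lam n Z y wstar \<bullet> u) = (\<lambda>u. 0)"
        by (rule differential_zero_maxmin[where S=UNIV, OF _ _ Lfun_deriv[OF l_deriv]]) (use wstar_min in auto)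
      then have "Gf l' lam n Z y wstar \<bullet> Gf l' lam n Z y wstar = 0" by metis
      then show ?thesis by simp
    qed
    have HmHf: "\<And>u. Hm *v u = Hf u"
      unfolding Hm_def Hf_def by (rule hess_eqI[OF gradG Gf_deriv[OF l'_deriv]])
    have lpp: "\<And>s yy. l'' s yy \<ge> 0" by (rule lpp_nonneg[OF l_deriv l'_deriv l_convex])
    have ker: "\<forall>u. Hm *v u = 0 \<longrightarrow> u = 0"
    proof (intro allI impI)
      fix u assume "Hm *v u = 0"
      then have "u \<bullet> Hf u = 0" using HmHf by simp
      moreover have "u \<bullet> Hf u = (\<Sum>i<n. l'' (wstar \<bullet> Z' i) (y i) * (u \<bullet> Z' i)\<^sup>2 + lam * (u \<bullet> u))"
        unfolding Hf_def by (simp add: inner_sum_right inner_add_right power2_eq_square mult.assoc)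
      moreover have "(\<Sum>i<n. l'' (wstar \<bullet> Z' i) (y i) * (u \<bullet> Z' i)\<^sup>2 + lam * (u \<bullet> u)) \<ge> (\<Sum>i<n. lam * (u \<bullet> u))"
        using lpp by (intro sum_mono) simp
      ultimately have "real n * (lam * (u \<bullet> u)) \<le> 0" by simp
      then have "lam * (u \<bullet> u) \<le> 0" using npos by (simp add: mult_le_0_iff)
      then have "u \<bullet> u \<le> 0" using lam_pos by (simp add: mult_le_0_iff)
      then show "u = 0" by (metis inner_eq_zero_iff inner_ge_zero order_antisym)
    qed
    have inv: "invertible Hm"
      using ker by (simp add: invertible_left_inverse matrix_left_invertible_ker)
    have "Hm ** matrix_inv Hm = mat 1 \<and> matrix_inv Hm ** Hm = mat 1"
      unfolding matrix_inv_def by (rule someI_ex) (use inv in \<open>simp add: invertible_def\<close>)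
    then have Hv: "Hf v = \<Delta>"
      unfolding v_def HmHf[symmetric] by (simp add: matrix_vector_mul_assoc)
    have Dl: "\<Delta> = - Gf l' lam n Z' y wstar"
      unfolding \<Delta>_def gradG G0 by simp
    define r where "r = (\<lambda>i. l' ((wstar + v) \<bullet> Z' i) (y i) - l' (wstar \<bullet> Z' i) (y i) - l'' (wstar \<bullet> Z' i) (y i) * (v \<bullet> Z' i))"
    have expand: "Gf l' lam n Z' y (wstar + v) = (\<Sum>i<n. r i *\<^sub>R Z' i)"
    proof -
      have "Gf l' lam n Z' y (wstar + v) = Gf l' lam n Z' y (wstar + v) - Gf l' lam n Z' y wstar - Hf v"
        using Hv Dl by simp
      also have "\<dots> = (\<Sum>i<n. r i *\<^sub>R Z' i)"
        unfolding Gf_def Hf_def r_def sum_subtractf[symmetric]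
        by (rule sum.cong) (auto simp: algebra_simps)
      finally show ?thesis .
    qed
    define F0 where "F0 = sqrt (\<Sum>k<L. B ^ (2 * k))"
    have F0F: "F = F0" unfolding F_def F0_def ..
    have F0nn: "F0 \<ge> 0" unfolding F0_def by (intro real_sqrt_ge_zero sum_nonneg) (simp add: power_mult)
    have Zb: "norm (Z' i) \<le> F0" if "i < n" for i
      unfolding Z'_def F0_def
    proof (rule embed_norm[OF pidx])
      show "\<forall>u. (\<Sum>j=1..J. sqnorm (g i) (mat_apply (g i) (matfun (h j) (g i) (S' i)) u)) \<le> B\<^sup>2 * sqnorm (g i) u"
        using frame that by blast
      show "\<forall>a<g i. \<bar>x' i a\<bar> \<le> 1" using A5 that unfolding x'_def by auto
    qed
    have rb: "\<bar>r i\<bar> \<le> \<gamma>2 * (v \<bullet> Z' i)\<^sup>2" if "i < n" for i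
    proof -
      have "\<bar>l' ((wstar + v) \<bullet> Z' i) (y i) - l' (wstar \<bullet> Z' i) (y i) - l'' (wstar \<bullet> Z' i) (y i) * ((wstar + v) \<bullet> Z' i - wstar \<bullet> Z' i)\<bar>
          \<le> \<gamma>2 * ((wstar + v) \<bullet> Z' i - wstar \<bullet> Z' i)\<^sup>2"
        by (rule taylor_bound[where f="\<lambda>t. l' t (y i)"]) (use l'_deriv A4 that in auto)
      then show ?thesis unfolding r_def by (simp add: inner_add_left)
    qed
    have vz: "(v \<bullet> Z' i)\<^sup>2 \<le> (F0 * norm v)\<^sup>2" if "i < n" for i
    proof -
      have "\<bar>v \<bullet> Z' i\<bar> \<le> norm v * norm (Z' i)" by (rule Cauchy_Schwarz_ineq2)
      also have "\<dots> \<le> norm v * F0" using Zb[OF that] by (intro mult_left_mono) auto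
      finally show ?thesis by (metis abs_le_square_iff abs_of_nonneg mult.commute F0nn norm_ge_zero zero_le_mult_iff)
    qed
    have r2: "(r i)\<^sup>2 \<le> (\<gamma>2 * F0 * norm v)\<^sup>2 * (Z' i \<bullet> v)\<^sup>2" if "i < n" for i
    proof -
      have "(r i)\<^sup>2 \<le> (\<gamma>2 * (v \<bullet> Z' i)\<^sup>2)\<^sup>2"
        using rb[OF that] by (metis abs_le_square_iff abs_of_nonneg g2 zero_le_power2 zero_le_mult_iff)
      also have "\<dots> = \<gamma>2\<^sup>2 * (v \<bullet> Z' i)\<^sup>2 * (v \<bullet> Z' i)\<^sup>2" by (simp add: power_mult_distrib power2_eq_square)
      also have "\<dots> \<le> \<gamma>2\<^sup>2 * (F0 * norm v)\<^sup>2 * (v \<bullet> Z' i)\<^sup>2"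
        using vz[OF that] by (intro mult_right_mono mult_left_mono) auto
      finally show ?thesis by (simp add: power_mult_distrib inner_commute mult.assoc)
    qed
    have sr: "sqrt (\<Sum>i<n. (r i)\<^sup>2) \<le> \<gamma>2 * F0 * norm v * rows_apply_norm n Z' v"
    proof -
      have "(\<Sum>i<n. (r i)\<^sup>2) \<le> (\<Sum>i<n. (\<gamma>2 * F0 * norm v)\<^sup>2 * (Z' i \<bullet> v)\<^sup>2)"
        using r2 by (intro sum_mono) auto
      also have "\<dots> = (\<gamma>2 * F0 * norm v * rows_apply_norm n Z' v)\<^sup>2"
        unfolding rows_apply_norm_def by (simp add: power_mult_distrib sum_distrib_left sum_nonneg)
      finally show ?thesis using g2 F0nn ran_nonneg[of n Z' v]
        by (simp add: real_sqrt_le_iff real_le_lsqrt)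
    qed
    have "norm (grad (Lfun l lam n Z' y) (wstar + v)) = norm (\<Sum>i<n. r i *\<^sub>R Z' i)"
      unfolding gradG expand ..
    also have "\<dots> \<le> sqrt (\<Sum>i<n. (r i)\<^sup>2) * rows_opnorm n Z'" by (rule transpose_bound)
    also have "\<dots> \<le> \<gamma>2 * F0 * norm v * rows_apply_norm n Z' v * rows_opnorm n Z'"
      using sr opnorm_nonneg[of n Z'] by (intro mult_right_mono) auto
    finally show ?thesis unfolding v_def F0F by (simp add: ac_simps)
  qed
qed

end
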